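(* Let $r,t$ be integers with $2\le r\le t\le 2r$ and $t\ge 3$, let $\alpha=2^r-1$, $\beta=2^{t-1}-2^{r-1}$, and let $\mathcal{C}\subseteq\mathbb{Z}_2^\alpha\times\mathbb{Z}_4^\beta$ be a $\mathbb{Z}_2\mathbb{Z}_4$-additive 1-perfect code. Let $\mathcal{C}'\subseteq\mathbb{Z}_2^{\alpha+1}\times\mathbb{Z}_4^\beta$ be obtained from $\mathcal{C}$ by inserting, at a fixed position of the $\mathbb{Z}_2$ part of every codeword $\mathbf{u}$, an extra binary coordinate equal to $w(\mathbf{u})\bmod 2$ (an even parity check coordinate). Then $\mathcal{C}'$ is not $\mathbb{Z}_2\mathbb{Z}_4$-cyclic.
   Context: A $\mathbb{Z}_2\mathbb{Z}_4$-additive code is an additive subgroup of $\mathbb{Z}_2^\alpha\times\mathbb{Z}_4^\beta$; vectors are written $\mathbf{u}=(u\mid u')$ with $u\in\mathbb{Z}_2^\alpha$, $u'\in\mathbb{Z}_4^\beta$. The weight is $w(\mathbf{u})=w_H(u)+w_L(u')$, where $w_H$ is Hamming weight and $w_L$ is Lee weight (Lee weights of $0,1,2,3$ are $0,1,2,1$). The Gray map $\phi:\mathbb{Z}_4\to\mathbb{Z}_2^2$ is $0\mapsto(0,0),1\mapsto(0,1),2\mapsto(1,1),3\mapsto(1,0)$, and $\Phi(u\mid u')=(u\mid\phi(u'_1),\dots,\phi(u'_\beta))$. A binary code $C\subseteq\mathbb{Z}_2^n$ is 1-perfect if the Hamming balls of radius 1 around its codewords partition $\mathbb{Z}_2^n$;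 a $\mathbb{Z}_2\mathbb{Z}_4$-additive code is 1-perfect if its Gray image is. With $\sigma(v_1,\dots,v_m)=(v_m,v_1,\dots,v_{m-1})$ and $\sigma(u\mid u')=(\sigma(u)\mid\sigma(u'))$, a $\mathbb{Z}_2\mathbb{Z}_4$-additive code is $\mathbb{Z}_2\mathbb{Z}_4$-cyclic if it is closed under $\sigma$. *)

theory Defs
  imports Main
begin

text \<open>Vectors of Z2^alpha x Z4^beta are pairs (u, u') of nat lists; entries of u lie in {0,1},
entries of u' in {0,1,2,3}.\<close>

type_synonym z2z4vec = "nat list \<times> nat list"

definition z2z4_space :: "nat \<Rightarrow> nat \<Rightarrow> z2z4vec set" where
  "z2z4_space \<alpha> \<beta> = {(u, u'). length u = \<alpha> \<and> length u' = \<beta> \<and>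
      (\<forall>x\<in>set u. x < 2) \<and> (\<forall>x\<in>set u'. x < 4)}"

definition z2z4_add :: "z2z4vec \<Rightarrow> z2z4vec \<Rightarrow> z2z4vec" where
  "z2z4_add v w = (map2 (\<lambda>a b. (a + b) mod 2) (fst v) (fst w),
                   map2 (\<lambda>a b. (a + b) mod 4) (snd v) (snd w))"

definition z2z4_zero :: "nat \<Rightarrow> nat \<Rightarrow> z2z4vec" where
  "z2z4_zero \<alpha> \<beta> = (replicate \<alpha> 0, replicate \<beta> 0)"

definition z2z4_neg :: "z2z4vec \<Rightarrow> z2z4vec" where
  "z2z4_neg v = (fst v, map (\<lambda>a. (4 - a) mod 4) (snd v))"

definition z2z4_additive :: "nat \<Rightarrow> nat \<Rightarrow> z2z4vec set \<Rightarrow> bool" where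
  "z2z4_additive \<alpha> \<beta> C \<longleftrightarrow> C \<subseteq> z2z4_space \<alpha> \<beta> \<and> z2z4_zero \<alpha> \<beta> \<in> C \<and>
     (\<forall>v\<in>C. \<forall>w\<in>C. z2z4_add v w \<in> C) \<and> (\<forall>v\<in>C. z2z4_neg v \<in> C)"

definition lee_wt :: "nat \<Rightarrow> nat" where
  "lee_wt a = (if a = 0 then 0 else if a = 2 then 2 else 1)"

definition z2z4_weight :: "z2z4vec \<Rightarrow> nat" where
  "z2z4_weight v = length (filter (\<lambda>a. a \<noteq> 0) (fst v)) + sum_list (map lee_wt (snd v))"

definition gray :: "nat \<Rightarrow> nat list" where
  "gray a = (if a = 0 then [0,0] else if a = 1 then [0,1] else if a = 2 then [1,1] else [1,0])"

definition Gray_map :: "z2z4vec \<Rightarrow> nat list" where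
  "Gray_map v = fst v @ concat (map gray (snd v))"

definition hamming_dist :: "nat list \<Rightarrow> nat list \<Rightarrow> nat" where
  "hamming_dist x y = length (filter (\<lambda>(a, b). a \<noteq> b) (zip x y))"

definition binvecs :: "nat \<Rightarrow> nat list set" where
  "binvecs n = {x. length x = n \<and> (\<forall>a\<in>set x. a < 2)}"

definition one_perfect :: "nat \<Rightarrow> nat list set \<Rightarrow> bool" where
  "one_perfect n B \<longleftrightarrow> B \<subseteq> binvecs n \<and>
     (\<forall>x\<in>binvecs n. \<exists>!c. c \<in> B \<and> hamming_dist x c \<le> 1)"

definition z2z4_one_perfect :: "nat \<Rightarrow> nat \<Rightarrow> z2z4vec set \<Rightarrow> bool" where
  "z2z4_one_perfect \<alpha> \<beta> C \<longleftrightarrow> z2z4_additive \<alpha> \<beta> C \<and> one_perfect (\<alpha> + 2 * \<beta>) (Gray_map ` C)"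

definition cshift :: "nat list \<Rightarrow> nat list" where
  "cshift xs = (if xs = [] then [] else last xs # butlast xs)"

definition z2z4_sigma :: "z2z4vec \<Rightarrow> z2z4vec" where
  "z2z4_sigma v = (cshift (fst v), cshift (snd v))"

definition z2z4_cyclic :: "z2z4vec set \<Rightarrow> bool" where
  "z2z4_cyclic C \<longleftrightarrow> (\<forall>v\<in>C. z2z4_sigma v \<in> C)"

text \<open>Insert parity coordinate w(u) mod 2 at position p (0-based, 0 \<le> p \<le> alpha) of the Z2 part.\<close>
definition parity_extend :: "nat \<Rightarrow> z2z4vec \<Rightarrow> z2z4vec" where
  "parity_extend p v = (take p (fst v) @ [z2z4_weight v mod 2] @ drop p (fst v), snd v)"

end

theory Submission
  imports Defs
begin

lemma hd_card: "length x = length y \<Longrightarrow> hamming_dist x y = card {i. i < length x \<and> x!i \<noteq> y!i}"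
  unfolding hamming_dist_def length_filter_conv_card
  by (rule arg_cong[where f=card]) (auto simp: nth_zip)

lemma hd_append: "length a = length c \<Longrightarrow> hamming_dist (a@b) (c@d) = hamming_dist a c + hamming_dist b d"
  unfolding hamming_dist_def by simp

lemma hd_self[simp]: "hamming_dist x x = 0"
  unfolding hamming_dist_def by (induct x) auto

lemma len_gray[simp]: "length (gray a) = 2" by (simp add: gray_def)

lemma len_concat_gray[simp]: "length (concat (map gray u)) = 2 * length u"
  by (induct u) auto

lemma less4_cases: "(a::nat) < 4 \<Longrightarrow> a = 0 \<or> a = 1 \<or> a = 2 \<or> a = 3" by auto

lemma hd_gray: "a < 4 \<Longrightarrow> b < 4 \<Longrightarrow> hamming_dist (gray a) (gray b) = lee_wt ((a + (4-b) mod 4) mod 4)"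
  apply (drule less4_cases)+
  by (auto simp: gray_def lee_wt_def hamming_dist_def)

lemma hd_concat: "length u = length w \<Longrightarrow> \<forall>a\<in>set u. a < 4 \<Longrightarrow> \<forall>a\<in>set w. a < 4 \<Longrightarrow>
  hamming_dist (concat (map gray u)) (concat (map gray w)) =
  sum_list (map lee_wt (map2 (\<lambda>a b. (a+b) mod 4) u (map (\<lambda>a. (4-a) mod 4) w)))"
proof (induct u arbitrary: w)
  case Nil then show ?case by (simp add: hamming_dist_def)
next
  case (Cons a u)
  then obtain b w' where w: "w = b # w'" by (cases w) auto
  show ?case using Cons w by (simp add: hd_append hd_gray)
qed

lemma hd_bin: "length x = length y \<Longrightarrow> \<forall>a\<in>set x. a < 2 \<Longrightarrow> \<forall>a\<in>set y. a < 2 \<Longrightarrow>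
  hamming_dist x y = length (filter (\<lambda>a. a \<noteq> 0) (map2 (\<lambda>a b. (a+b) mod 2) x y))"
proof (induct x arbitrary: y)
  case Nil then show ?case by (simp add: hamming_dist_def)
next
  case (Cons a x)
  then obtain b y' where y: "y = b # y'" by (cases y) auto
  have "a < 2" "b < 2" using Cons y by auto
  then have "(a \<noteq> b) = ((a+b) mod 2 \<noteq> 0)" by (auto simp: less_Suc_eq)
  then show ?case using Cons y by (simp add: hamming_dist_def)
qed

lemma ISO: "v \<in> z2z4_space \<alpha> \<beta> \<Longrightarrow> w \<in> z2z4_space \<alpha> \<beta> \<Longrightarrow>
  hamming_dist (Gray_map v) (Gray_map w) = z2z4_weight (z2z4_add v (z2z4_neg w))"
  unfolding Gray_map_def z2z4_weight_def z2z4_add_def z2z4_neg_def z2z4_space_def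
  by (auto simp: hd_append hd_concat hd_bin)

lemma binvecs_alt: "binvecs n = {xs. set xs \<subseteq> {0..<2} \<and> length xs = n}"
  unfolding binvecs_def by auto

lemma finite_binvecs: "finite (binvecs n)"
  unfolding binvecs_alt by (rule finite_lists_length_eq) simp

lemma card_binvecs: "card (binvecs n) = 2^n"
  unfolding binvecs_alt by (subst card_lists_length_eq) simp_all

lemma BP:
  assumes P: "one_perfect n B" and a: "a \<in> B" and b: "b \<in> B" and ab: "a \<noteq> b"
    and d: "hamming_dist a b \<le> 2"
  shows False
proof -
  have av: "a \<in> binvecs n" and bv: "b \<in> binvecs n" using P a b unfolding one_perfect_def by auto
  have la: "length a = n" and lb: "length b = n" using av bv unfolding binvecs_def by auto
  define I where "I = {i. i < n \<and> a!i \<noteq> b!i}"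
  have fI: "finite I" unfolding I_def by auto
  have hab: "hamming_dist a b = card I" using hd_card[of a b] la lb unfolding I_def by simp
  have "I \<noteq> {}"
  proof
    assume "I = {}"
    then have "a = b" using la lb unfolding I_def by (auto intro: nth_equalityI)
    then show False using ab by simp
  qed
  then obtain i where iI: "i \<in> I" by auto
  then have i: "i < n" "a!i \<noteq> b!i" unfolding I_def by auto
  define y where "y = a[i := b!i]"
  have ly: "length y = n" using la unfolding y_def by simp
  have yv: "y \<in> binvecs n"
  proof -
    have "set y \<subseteq> insert (b!i) (set a)" unfolding y_def by (rule set_update_subset_insert)
    moreover have "b!i \<in> set b" using i lb by simp
    ultimately show ?thesis using av bv ly unfolding binvecs_def by auto
  qed
  have "{j. j < length y \<and> y!j \<noteq> a!j} = {i}" using i la unfolding y_def by (auto simp: nth_list_update)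
  then have hya: "hamming_dist y a = 1" using hd_card[of y a] ly la by simp
  have "{j. j < length y \<and> y!j \<noteq> b!j} = I - {i}" using i la ly unfolding y_def I_def
    by (auto simp: nth_list_update)
  then have "hamming_dist y b = card I - 1" using hd_card[of y b] ly lb fI iI by simp
  then have hyb: "hamming_dist y b \<le> 1" using hab d by simp
  from P yv have "\<exists>!c. c \<in> B \<and> hamming_dist y c \<le> 1" unfolding one_perfect_def by auto
  then show False using a b ab hya hyb by auto
qed

lemma ball_sub:
  assumes x: "x \<in> binvecs n" and b: "b \<in> binvecs n" and d: "hamming_dist x b \<le> 1"
  shows "x \<in> (\<lambda>i. if i = n then b else b[i := 1 - b!i]) ` {0..n}"
proof -
  have lx: "length x = n" and lb: "length b = n" using x b unfolding binvecs_def by auto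
  define I where "I = {i. i < n \<and> x!i \<noteq> b!i}"
  have c: "card I \<le> 1" using d hd_card[of x b] lx lb unfolding I_def by simp
  have fI: "finite I" unfolding I_def by auto
  show ?thesis
  proof (cases "card I = 0")
    case True
    then have "I = {}" using fI by simp
    then have "x = b" using lx lb unfolding I_def by (auto intro: nth_equalityI)
    then show ?thesis by (intro image_eqI[of _ _ n]) auto
  next
    case False
    then have "card I = 1" using c by simp
    then obtain i where Ii: "I = {i}" by (auto simp: card_Suc_eq)
    then have i: "i < n" "x!i \<noteq> b!i" unfolding I_def by auto
    have "x!i < 2" "b!i < 2" using x b i lx lb unfolding binvecs_def by (auto simp: nth_mem)
    then have xi: "x!i = 1 - b!i" using i by auto
    have "x = b[i := 1 - b!i]"
    proof (rule nth_equalityI)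
      show "length x = length (b[i := 1 - b ! i])" using lx lb by simp
      fix j assume j: "j < length x"
      show "x ! j = b[i := 1 - b ! i] ! j"
      proof (cases "j = i")
        case True then show ?thesis using xi lb i by simp
      next
        case False
        then have "j \<notin> I" using Ii by auto
        then show ?thesis using False j lx unfolding I_def by simp
      qed
    qed
    then show ?thesis using i by (intro image_eqI[of _ _ i]) auto
  qed
qed

lemma BC:
  assumes sub: "B \<subseteq> binvecs n" and cov: "\<forall>x\<in>binvecs n. \<exists>b\<in>B. hamming_dist x b \<le> 1"
  shows "2^n \<le> card B * (n+1)"
proof -
  have fB: "finite B" using sub finite_binvecs finite_subset by blast
  let ?f = "\<lambda>b i. if i = n then b else b[i := 1 - b!i]"
  have "binvecs n \<subseteq> (\<Union>b\<in>B. ?f b ` {0..n})"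
  proof
    fix x assume x: "x \<in> binvecs n"
    then obtain b where "b \<in> B" "hamming_dist x b \<le> 1" using cov by auto
    then show "x \<in> (\<Union>b\<in>B. ?f b ` {0..n})" using ball_sub[OF x] sub by blast
  qed
  then have "card (binvecs n) \<le> card (\<Union>b\<in>B. ?f b ` {0..n})"
    by (intro card_mono) (auto simp: fB)
  also have "\<dots> \<le> (\<Sum>b\<in>B. card (?f b ` {0..n}))" by (rule card_UN_le[OF fB])
  also have "\<dots> \<le> (\<Sum>b\<in>B. n+1)" by (intro sum_mono order.trans[OF card_image_le]) auto
  finally show ?thesis by (simp add: card_binvecs)
qed

abbreviation zs :: "nat \<Rightarrow> nat list" where "zs n \<equiv> replicate n 0"

lemma space_iff: "(u, w) \<in> z2z4_space a b \<longleftrightarrow> length u = a \<and> length w = b \<and> (\<forall>x\<in>set u. x < 2) \<and> (\<forall>x\<in>set w. x < 4)"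
  unfolding z2z4_space_def by auto

lemma zero_space[simp]: "z2z4_zero a b \<in> z2z4_space a b"
  unfolding z2z4_zero_def z2z4_space_def by auto

lemma add_space: "v \<in> z2z4_space a b \<Longrightarrow> w \<in> z2z4_space a b \<Longrightarrow> z2z4_add v w \<in> z2z4_space a b"
  unfolding z2z4_add_def z2z4_space_def by (auto simp: set_zip)

lemma neg_space: "v \<in> z2z4_space a b \<Longrightarrow> z2z4_neg v \<in> z2z4_space a b"
  unfolding z2z4_neg_def z2z4_space_def by auto


lemma cnt01: "\<forall>a\<in>set (x::nat list). a < 2 \<Longrightarrow> length (filter (\<lambda>a. a \<noteq> 0) x) = sum_list x"
proof (induct x)
  case Nil then show ?case by simp
next
  case (Cons a x)
  then have "a = 0 \<or> a = 1" by auto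
  then show ?case using Cons by auto
qed


lemma lee_par: "\<forall>a\<in>set u. a < 4 \<Longrightarrow> sum_list (map lee_wt u) mod 2 = sum_list u mod 2"
proof (induct u)
  case Nil then show ?case by simp
next
  case (Cons a u)
  have "a = 0 \<or> a = 1 \<or> a = 2 \<or> a = 3" using Cons(2) by auto
  then have h: "lee_wt a mod 2 = a mod 2" by (auto simp: lee_wt_def)
  have IH: "sum_list (map lee_wt u) mod 2 = sum_list u mod 2" using Cons by simp
  show ?case using mod_add_cong[OF h IH] by simp
qed

lemma wt_par: "v \<in> z2z4_space a b \<Longrightarrow> z2z4_weight v mod 2 = (sum_list (fst v) + sum_list (snd v)) mod 2"
proof -
  assume v: "v \<in> z2z4_space a b"
  have h1: "length (filter (\<lambda>a. a \<noteq> 0) (fst v)) mod 2 = sum_list (fst v) mod 2"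
    using cnt01[of "fst v"] v unfolding z2z4_space_def by auto
  have h2: "sum_list (map lee_wt (snd v)) mod 2 = sum_list (snd v) mod 2"
    using lee_par[of "snd v"] v unfolding z2z4_space_def by auto
  show ?thesis unfolding z2z4_weight_def using mod_add_cong[OF h1 h2] .
qed

lemma sum_add2: "length (x::nat list) = length y \<Longrightarrow> sum_list (map2 (\<lambda>a b. (a+b) mod 2) x y) mod 2 = (sum_list x + sum_list y) mod 2"
proof (induct x arbitrary: y)
  case Nil then show ?case by simp
next
  case (Cons a x)
  then obtain c y' where y: "y = c # y'" by (cases y) auto
  then have IH: "sum_list (map2 (\<lambda>a b. (a+b) mod 2) x y') mod 2 = (sum_list x + sum_list y') mod 2" using Cons by simp
  have m: "((a + c) mod 2) mod 2 = (a + c) mod 2" by simp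
  have "((a+c) mod 2 + sum_list (map2 (\<lambda>a b. (a+b) mod 2) x y')) mod 2 = ((a+c) + (sum_list x + sum_list y')) mod 2"
    using mod_add_cong[OF m IH] .
  then show ?case using y by (simp add: algebra_simps)
qed

lemma sum_add4: "length (x::nat list) = length y \<Longrightarrow> sum_list (map2 (\<lambda>a b. (a+b) mod 4) x y) mod 2 = (sum_list x + sum_list y) mod 2"
proof (induct x arbitrary: y)
  case Nil then show ?case by simp
next
  case (Cons a x)
  then obtain c y' where y: "y = c # y'" by (cases y) auto
  then have IH: "sum_list (map2 (\<lambda>a b. (a+b) mod 4) x y') mod 2 = (sum_list x + sum_list y') mod 2" using Cons by simp
  have m: "((a + c) mod 4) mod 2 = (a + c) mod 2" by (simp add: mod_mod_cancel)
  have "((a+c) mod 4 + sum_list (map2 (\<lambda>a b. (a+b) mod 4) x y')) mod 2 = ((a+c) + (sum_list x + sum_list y')) mod 2"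
    using mod_add_cong[OF m IH] .
  then show ?case using y by (simp add: algebra_simps)
qed

lemma sum_neg: "\<forall>a\<in>set (u::nat list). a < 4 \<Longrightarrow> sum_list (map (\<lambda>a. (4-a) mod 4) u) mod 2 = sum_list u mod 2"
proof (induct u)
  case Nil then show ?case by simp
next
  case (Cons a u)
  have "a = 0 \<or> a = 1 \<or> a = 2 \<or> a = 3" using Cons(2) by auto
  then have h: "((4-a) mod 4) mod 2 = a mod 2" by auto
  have IH: "sum_list (map (\<lambda>a. (4-a) mod 4) u) mod 2 = sum_list u mod 2" using Cons by simp
  show ?case using mod_add_cong[OF h IH] by simp
qed

lemma wt_add_par: "v \<in> z2z4_space a b \<Longrightarrow> w \<in> z2z4_space a b \<Longrightarrow>
   z2z4_weight (z2z4_add v w) mod 2 = (z2z4_weight v + z2z4_weight w) mod 2"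
proof -
  assume v: "v \<in> z2z4_space a b" and w: "w \<in> z2z4_space a b"
  have l1: "length (fst v) = length (fst w)" and l2: "length (snd v) = length (snd w)"
    using v w unfolding z2z4_space_def by auto
  have f: "sum_list (fst (z2z4_add v w)) mod 2 = (sum_list (fst v) + sum_list (fst w)) mod 2"
    unfolding z2z4_add_def using sum_add2[OF l1] by simp
  have s: "sum_list (snd (z2z4_add v w)) mod 2 = (sum_list (snd v) + sum_list (snd w)) mod 2"
    unfolding z2z4_add_def using sum_add4[OF l2] by simp
  have "z2z4_weight (z2z4_add v w) mod 2 = (sum_list (fst (z2z4_add v w)) + sum_list (snd (z2z4_add v w))) mod 2"
    using wt_par[OF add_space[OF v w]] .
  also have "\<dots> = ((sum_list (fst v) + sum_list (fst w)) + (sum_list (snd v) + sum_list (snd w))) mod 2"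
    using mod_add_cong[OF f s] .
  also have "\<dots> = ((sum_list (fst v) + sum_list (snd v)) + (sum_list (fst w) + sum_list (snd w))) mod 2"
    by (simp add: algebra_simps)
  also have "\<dots> = (z2z4_weight v + z2z4_weight w) mod 2"
    using mod_add_cong[OF wt_par[OF v, symmetric] wt_par[OF w, symmetric]] .
  finally show ?thesis .
qed

lemma wt_neg_par: "v \<in> z2z4_space a b \<Longrightarrow> z2z4_weight (z2z4_neg v) mod 2 = z2z4_weight v mod 2"
proof -
  assume v: "v \<in> z2z4_space a b"
  have s: "sum_list (snd (z2z4_neg v)) mod 2 = sum_list (snd v) mod 2"
    unfolding z2z4_neg_def using sum_neg[of "snd v"] v unfolding z2z4_space_def by auto
  have f: "sum_list (fst (z2z4_neg v)) mod 2 = sum_list (fst v) mod 2"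
    unfolding z2z4_neg_def by simp
  have "z2z4_weight (z2z4_neg v) mod 2 = (sum_list (fst (z2z4_neg v)) + sum_list (snd (z2z4_neg v))) mod 2"
    using wt_par[OF neg_space[OF v]] .
  also have "\<dots> = (sum_list (fst v) + sum_list (snd v)) mod 2"
    using mod_add_cong[OF f s] .
  finally show ?thesis using wt_par[OF v] by simp
qed

lemma pe_space: "v \<in> z2z4_space a b \<Longrightarrow> p \<le> a \<Longrightarrow> parity_extend p v \<in> z2z4_space (Suc a) b"
  unfolding parity_extend_def z2z4_space_def
  by (auto dest: in_set_takeD in_set_dropD)

lemma pe_add: "v \<in> z2z4_space a b \<Longrightarrow> w \<in> z2z4_space a b \<Longrightarrow> p \<le> a \<Longrightarrow>
   parity_extend p (z2z4_add v w) = z2z4_add (parity_extend p v) (parity_extend p w)"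
proof -
  assume v: "v \<in> z2z4_space a b" and w: "w \<in> z2z4_space a b" and p: "p \<le> a"
  have l1: "length (fst v) = length (fst w)" using v w unfolding z2z4_space_def by auto
  have pv: "length (fst v) \<ge> p" using v p unfolding z2z4_space_def by auto
  have par: "z2z4_weight (z2z4_add v w) mod 2 = (z2z4_weight v mod 2 + z2z4_weight w mod 2) mod 2"
    using wt_add_par[OF v w] by (simp add: mod_add_eq)
  show ?thesis using l1 pv par unfolding parity_extend_def z2z4_add_def
    by (simp add: take_zip drop_zip zip_append take_map drop_map)
qed

lemma pe_neg: "v \<in> z2z4_space a b \<Longrightarrow>
   parity_extend p (z2z4_neg v) = z2z4_neg (parity_extend p v)"
  using wt_neg_par[of v a b]
  unfolding parity_extend_def z2z4_neg_def by auto

lemma wt_zero_imp: "v \<in> z2z4_space a b \<Longrightarrow> z2z4_weight v = 0 \<Longrightarrow> v = z2z4_zero a b"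
proof -
  assume v: "v \<in> z2z4_space a b" and w: "z2z4_weight v = 0"
  obtain x y where xy: "v = (x, y)" by (cases v)
  have lx: "length x = a" and ly: "length y = b" and y4: "\<forall>c\<in>set y. c < 4" using v xy unfolding z2z4_space_def by auto
  have "filter (\<lambda>a. a \<noteq> 0) x = []" using w xy unfolding z2z4_weight_def by simp
  then have "\<forall>c\<in>set x. c = 0" by (simp add: filter_empty_conv)
  then have x0: "x = replicate a 0" using lx by (metis replicate_length_same)
  have "\<forall>c\<in>set y. lee_wt c = 0" using w xy unfolding z2z4_weight_def by simp
  then have "\<forall>c\<in>set y. c = 0" by (auto simp: lee_wt_def split: if_splits)
  then have "y = replicate b 0" using ly by (metis replicate_length_same)
  then show ?thesis using x0 xy unfolding z2z4_zero_def by simp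
qed

lemma wt_pos: "v \<in> z2z4_space a b \<Longrightarrow> v \<noteq> z2z4_zero a b \<Longrightarrow> 0 < z2z4_weight v"
  using wt_zero_imp by blast

lemma add_zero_r: "v \<in> z2z4_space a b \<Longrightarrow> z2z4_add v (z2z4_zero a b) = v"
proof -
  assume v: "v \<in> z2z4_space a b"
  obtain x y where xy: "v = (x, y)" by (cases v)
  have lx: "length x = a" and ly: "length y = b" and x2: "\<forall>c\<in>set x. c < 2" and y4: "\<forall>c\<in>set y. c < 4"
    using v xy unfolding z2z4_space_def by auto
  have "map2 (\<lambda>a b. (a + b) mod 2) x (replicate a 0) = x"
    using lx x2 by (intro nth_equalityI) (auto simp: nth_mem)
  moreover have "map2 (\<lambda>a b. (a + b) mod 4) y (replicate b 0) = y"
    using ly y4 by (intro nth_equalityI) (auto simp: nth_mem)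
  ultimately show ?thesis using xy unfolding z2z4_add_def z2z4_zero_def by simp
qed

lemma neg_zero[simp]: "z2z4_neg (z2z4_zero a b) = z2z4_zero a b"
  unfolding z2z4_neg_def z2z4_zero_def by simp

lemma eq_of_wt0:
  assumes v: "v \<in> z2z4_space a b" and w: "w \<in> z2z4_space a b"
    and h: "z2z4_weight (z2z4_add v (z2z4_neg w)) = 0"
  shows "v = w"
proof -
  have "z2z4_add v (z2z4_neg w) = z2z4_zero a b"
    using wt_zero_imp[OF add_space[OF v neg_space[OF w]] h] .
  then have e1: "map2 (\<lambda>a b. (a + b) mod 2) (fst v) (fst w) = replicate a 0"
    and e2: "map2 (\<lambda>a b. (a + b) mod 4) (snd v) (map (\<lambda>a. (4-a) mod 4) (snd w)) = replicate b 0"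
    unfolding z2z4_add_def z2z4_neg_def z2z4_zero_def by auto
  have "fst v = fst w"
  proof (rule nth_equalityI)
    show "length (fst v) = length (fst w)" using v w unfolding z2z4_space_def by auto
    fix i assume i: "i < length (fst v)"
    have "(fst v ! i + fst w ! i) mod 2 = 0"
      using arg_cong[OF e1, of "\<lambda>l. l ! i"] i v w unfolding z2z4_space_def by auto
    moreover have "fst v ! i < 2" "fst w ! i < 2" using i v w unfolding z2z4_space_def by (auto simp: nth_mem)
    then have "fst v ! i = 0 \<or> fst v ! i = 1" "fst w ! i = 0 \<or> fst w ! i = 1" by auto
    ultimately show "fst v ! i = fst w ! i" by auto
  qed
  moreover have "snd v = snd w"
  proof (rule nth_equalityI)
    show "length (snd v) = length (snd w)" using v w unfolding z2z4_space_def by auto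
    fix i assume i: "i < length (snd v)"
    have "(snd v ! i + (4 - snd w ! i) mod 4) mod 4 = 0"
      using arg_cong[OF e2, of "\<lambda>l. l ! i"] i v w unfolding z2z4_space_def by auto
    moreover have "snd v ! i < 4" "snd w ! i < 4"
      using i v w unfolding z2z4_space_def by (auto simp: nth_mem)
    then have "snd v ! i = 0 \<or> snd v ! i = 1 \<or> snd v ! i = 2 \<or> snd v ! i = 3"
      "snd w ! i = 0 \<or> snd w ! i = 1 \<or> snd w ! i = 2 \<or> snd w ! i = 3" by auto
    ultimately show "snd v ! i = snd w ! i" by (elim disjE; simp)
  qed
  ultimately show ?thesis by (simp add: prod_eq_iff)
qed

lemma gray_bin: "v \<in> z2z4_space a b \<Longrightarrow> Gray_map v \<in> binvecs (a + 2*b)"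
  unfolding Gray_map_def z2z4_space_def binvecs_def
  by (auto simp: gray_def)

locale perf =
  fixes a b :: nat and C :: "z2z4vec set"
  assumes P: "z2z4_one_perfect a b C"
begin

lemma add_C: "z2z4_additive a b C" using P unfolding z2z4_one_perfect_def by simp

lemma C_space: "v \<in> C \<Longrightarrow> v \<in> z2z4_space a b" using add_C unfolding z2z4_additive_def by auto
lemma zero_C: "z2z4_zero a b \<in> C" using add_C unfolding z2z4_additive_def by auto
lemma addC: "v \<in> C \<Longrightarrow> w \<in> C \<Longrightarrow> z2z4_add v w \<in> C" using add_C unfolding z2z4_additive_def by auto
lemma negC: "v \<in> C \<Longrightarrow> z2z4_neg v \<in> C" using add_C unfolding z2z4_additive_def by auto

lemma perfB: "one_perfect (a + 2*b) (Gray_map ` C)" using P unfolding z2z4_one_perfect_def by simp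

lemma MIN:
  assumes v: "v \<in> C" and nz: "v \<noteq> z2z4_zero a b"
  shows "3 \<le> z2z4_weight v"
proof (rule ccontr)
  assume "\<not> 3 \<le> z2z4_weight v"
  then have le: "z2z4_weight v \<le> 2" by simp
  have vs: "v \<in> z2z4_space a b" using C_space[OF v] .
  have d: "hamming_dist (Gray_map v) (Gray_map (z2z4_zero a b)) = z2z4_weight v"
    using ISO[OF vs zero_space] add_zero_r[OF vs] by simp
  have pos: "0 < z2z4_weight v" using wt_pos[OF vs nz] .
  have "Gray_map v \<noteq> Gray_map (z2z4_zero a b)"
  proof
    assume "Gray_map v = Gray_map (z2z4_zero a b)"
    then have "hamming_dist (Gray_map v) (Gray_map (z2z4_zero a b)) = 0" by simp
    then show False using d pos by simp
  qed
  then show False using BP[OF perfB, of "Gray_map v" "Gray_map (z2z4_zero a b)"] v zero_C d le by auto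
qed

lemma COVER:
  assumes v: "v \<in> z2z4_space a b"
  shows "\<exists>c\<in>C. z2z4_weight (z2z4_add v (z2z4_neg c)) \<le> 1"
proof -
  have "Gray_map v \<in> binvecs (a + 2*b)" using gray_bin[OF v] .
  then obtain g where g: "g \<in> Gray_map ` C" "hamming_dist (Gray_map v) g \<le> 1"
    using perfB unfolding one_perfect_def by blast
  then obtain c where c: "c \<in> C" "g = Gray_map c" by auto
  show ?thesis using c g ISO[OF v C_space[OF c(1)]] by auto
qed

end

lemma cshift_rot: "cshift xs = rotate (length xs - 1) xs"
proof (cases "xs = []")
  case True then show ?thesis by (simp add: cshift_def)
next
  case False
  then have n: "length xs > 0" by simp
  show ?thesis
  proof (rule nth_equalityI)
    show "length (cshift xs) = length (rotate (length xs - 1) xs)"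
      using False by (simp add: cshift_def)
    fix i assume i: "i < length (cshift xs)"
    then have i': "i < length xs" using False by (simp add: cshift_def)
    show "cshift xs ! i = rotate (length xs - 1) xs ! i"
    proof (cases i)
      case 0
      then show ?thesis using False n i' by (simp add: cshift_def nth_rotate last_conv_nth)
    next
      case (Suc j)
      have e: "length xs - 1 + i = length xs + j" using Suc n by simp
      have "(length xs - 1 + i) mod length xs = j" unfolding e using Suc i' by simp
      then show ?thesis using False n i' Suc by (simp add: cshift_def nth_rotate nth_butlast)
    qed
  qed
qed

lemma sigma_pow: "(z2z4_sigma ^^ k) v = (rotate (k * (length (fst v) - 1)) (fst v), rotate (k * (length (snd v) - 1)) (snd v))"
proof (induct k)
  case 0 then show ?case by simp
next
  case (Suc k)
  have e: "\<And>n. n - 1 + k * (n - 1) = Suc k * (n - 1)" by simp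
  show ?case unfolding funpow.simps comp_apply Suc
    by (simp only: z2z4_sigma_def cshift_rot rotate_rotate length_rotate fst_conv snd_conv e)
qed

lemma cyc_pow: "z2z4_cyclic D \<Longrightarrow> v \<in> D \<Longrightarrow> (z2z4_sigma ^^ k) v \<in> D"
  unfolding z2z4_cyclic_def by (induct k) auto

lemma m2a: "((a+b) mod 2 + (b+c) mod 2) mod 2 = ((a::nat)+c) mod 2"
proof -
  have "((a+b) mod 2 + (b+c) mod 2) mod 2 = ((a+b) + (b+c)) mod 2" by (simp add: mod_add_eq)
  also have "(a+b) + (b+c) = (a + c) + 2*b" by simp
  finally show ?thesis by simp
qed
lemma m2b: "((a+b) mod 2 + (c+d) mod 2) mod 2 = (((a::nat)+c) mod 2 + (b+d) mod 2) mod 2"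
proof -
  have "((a+b) mod 2 + (c+d) mod 2) mod 2 = ((a+b) + (c+d)) mod 2" by (simp add: mod_add_eq)
  also have "\<dots> = ((a+c) + (b+d)) mod 2" by (simp add: algebra_simps)
  also have "\<dots> = ((a+c) mod 2 + (b+d) mod 2) mod 2" by (simp add: mod_add_eq)
  finally show ?thesis .
qed

definition bx :: "nat list \<Rightarrow> nat list \<Rightarrow> nat list" where
  "bx x y = map2 (\<lambda>a b. (a+b) mod 2) x y"

definition U :: "nat \<Rightarrow> nat list \<Rightarrow> nat list" where
  "U m x = bx x (rotate m x)"

lemma binvecsD: "x \<in> binvecs N \<Longrightarrow> length x = N \<and> (\<forall>i<N. x!i < 2)"
  unfolding binvecs_def by (auto simp: nth_mem)

lemma binvecsI: "length x = N \<Longrightarrow> (\<forall>i<N. x!i < 2) \<Longrightarrow> x \<in> binvecs N"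
  unfolding binvecs_def by (auto simp: in_set_conv_nth)

lemma bx_len[simp]: "length (bx x y) = min (length x) (length y)" unfolding bx_def by simp
lemma bx_nth: "i < length x \<Longrightarrow> i < length y \<Longrightarrow> bx x y ! i = (x!i + y!i) mod 2"
  unfolding bx_def by simp

lemma bx_bin: "x \<in> binvecs N \<Longrightarrow> y \<in> binvecs N \<Longrightarrow> bx x y \<in> binvecs N"
  by (rule binvecsI) (auto dest!: binvecsD simp: bx_nth)

lemma rot_bin: "x \<in> binvecs N \<Longrightarrow> rotate m x \<in> binvecs N"
  unfolding binvecs_def by auto

lemma U_bin: "x \<in> binvecs N \<Longrightarrow> U m x \<in> binvecs N"
  unfolding U_def by (intro bx_bin rot_bin)

lemma bx_comm: "bx x y = bx y x"
  unfolding bx_def by (intro nth_equalityI) (auto simp: add.commute)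

lemma mod2_cases: "(a::nat) < 2 \<Longrightarrow> a = 0 \<or> a = 1" by auto

lemma bx_cancel: "x \<in> binvecs N \<Longrightarrow> y \<in> binvecs N \<Longrightarrow> bx (bx x y) y = x"
proof -
  assume x: "x \<in> binvecs N" and y: "y \<in> binvecs N"
  show ?thesis
  proof (rule nth_equalityI)
    show "length (bx (bx x y) y) = length x" using x y by (auto dest!: binvecsD)
    fix i assume "i < length (bx (bx x y) y)"
    then have i: "i < N" using x y by (auto dest!: binvecsD)
    have "x!i < 2" "y!i < 2" using x y i by (auto dest!: binvecsD)
    then have "x!i = 0 \<or> x!i = 1" "y!i = 0 \<or> y!i = 1" by auto
    then show "bx (bx x y) y ! i = x ! i" using x y i by (auto dest!: binvecsD simp: bx_nth)
  qed
qed

lemma rot_nth: "x \<in> binvecs N \<Longrightarrow> i < N \<Longrightarrow> rotate m x ! i = x ! ((m + i) mod N)"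
  by (auto dest!: binvecsD simp: nth_rotate)

lemma U_nth: "x \<in> binvecs N \<Longrightarrow> i < N \<Longrightarrow> U m x ! i = (x!i + x!((m+i) mod N)) mod 2"
  unfolding U_def using rot_nth[of x N i m] by (auto dest!: binvecsD simp: bx_nth)

lemma UU: "x \<in> binvecs N \<Longrightarrow> U m (U m x) = U (2*m) x"
proof -
  assume x: "x \<in> binvecs N"
  have Ux: "U m x \<in> binvecs N" by (rule U_bin[OF x])
  show ?thesis
  proof (rule nth_equalityI)
    show "length (U m (U m x)) = length (U (2 * m) x)"
      using U_bin[OF Ux, of m] U_bin[OF x, of "2*m"] by (auto dest!: binvecsD)
    fix i assume "i < length (U m (U m x))"
    then have i: "i < N" using U_bin[OF Ux, of m] by (auto dest!: binvecsD)
    then have N: "N > 0" by simp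
    have j: "(m + i) mod N < N" using N by simp
    have idx0: "(m + (m + i) mod N) mod N = (m + (m + i)) mod N" by (simp add: mod_add_right_eq)
    have e2: "m + (m + i) = 2*m + i" by simp
    have idx: "(m + (m + i) mod N) mod N = (2*m + i) mod N" using idx0 unfolding e2 .
    have "U m (U m x) ! i = (U m x ! i + U m x ! ((m+i) mod N)) mod 2" using U_nth[OF Ux i] .
    also have "\<dots> = ((x!i + x!((m+i) mod N)) mod 2 + (x!((m+i) mod N) + x!((2*m+i) mod N)) mod 2) mod 2"
      using U_nth[OF x i] U_nth[OF x j] idx by simp
    also have "\<dots> = (x!i + x!((2*m+i) mod N)) mod 2" by (rule m2a)
    also have "\<dots> = U (2*m) x ! i" using U_nth[OF x i] by simp
    finally show "U m (U m x) ! i = U (2 * m) x ! i" .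
  qed
qed

lemma rot_bx: "x \<in> binvecs N \<Longrightarrow> y \<in> binvecs N \<Longrightarrow> rotate m (bx x y) = bx (rotate m x) (rotate m y)"
proof -
  assume x: "x \<in> binvecs N" and y: "y \<in> binvecs N"
  have b: "bx x y \<in> binvecs N" by (rule bx_bin[OF x y])
  show ?thesis
  proof (rule nth_equalityI)
    show "length (rotate m (bx x y)) = length (bx (rotate m x) (rotate m y))" using x y by (auto dest!: binvecsD)
    fix i assume "i < length (rotate m (bx x y))"
    then have i: "i < N" using b by (auto dest!: binvecsD)
    then have N: "N > 0" by simp
    have j: "(m + i) mod N < N" using N by simp
    have lx: "length x = N" "length y = N" using x y by (auto dest!: binvecsD)
    have "rotate m (bx x y) ! i = bx x y ! ((m + i) mod N)" using rot_nth[OF b i] .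
    also have "\<dots> = (x ! ((m + i) mod N) + y ! ((m + i) mod N)) mod 2" using bx_nth[of "(m+i) mod N" x y] lx j by simp
    also have "\<dots> = bx (rotate m x) (rotate m y) ! i"
      using rot_nth[OF x i] rot_nth[OF y i] bx_nth[of i "rotate m x" "rotate m y"] lx i by simp
    finally show "rotate m (bx x y) ! i = bx (rotate m x) (rotate m y) ! i" .
  qed
qed

lemma U_add: "x \<in> binvecs N \<Longrightarrow> y \<in> binvecs N \<Longrightarrow> U m (bx x y) = bx (U m x) (U m y)"
proof -
  assume x: "x \<in> binvecs N" and y: "y \<in> binvecs N"
  have b: "bx x y \<in> binvecs N" by (rule bx_bin[OF x y])
  show ?thesis
  proof (rule nth_equalityI)
    show "length (U m (bx x y)) = length (bx (U m x) (U m y))"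
      using U_bin[OF b, of m] U_bin[OF x, of m] U_bin[OF y, of m] by (auto dest!: binvecsD)
    fix i assume "i < length (U m (bx x y))"
    then have i: "i < N" using U_bin[OF b, of m] by (auto dest!: binvecsD)
    then have N: "N > 0" by simp
    have j: "(m + i) mod N < N" using N by simp
    have "U m (bx x y) ! i = (bx x y ! i + bx x y ! ((m+i) mod N)) mod 2" using U_nth[OF b i] .
    also have "\<dots> = ((x!i + y!i) mod 2 + (x!((m+i) mod N) + y!((m+i) mod N)) mod 2) mod 2"
    proof -
      have lx: "length x = N" "length y = N" using x y by (auto dest!: binvecsD)
      show ?thesis using bx_nth[of i x y] bx_nth[of "(m+i) mod N" x y] lx i j by simp
    qed
    also have "\<dots> = ((x!i + x!((m+i) mod N)) mod 2 + (y!i + y!((m+i) mod N)) mod 2) mod 2" by (rule m2b)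
    also have "\<dots> = bx (U m x) (U m y) ! i"
      using U_nth[OF x i] U_nth[OF y i] U_bin[OF x, of m] U_bin[OF y, of m] i by (auto dest!: binvecsD simp: bx_nth)
    finally show "U m (bx x y) ! i = bx (U m x) (U m y) ! i" .
  qed
qed

lemma T_pow2_aux: "x \<in> binvecs N \<Longrightarrow> (U 1 ^^ k) x \<in> binvecs N"
  by (induct k) (auto intro: U_bin)

lemma T_pow2: "x \<in> binvecs N \<Longrightarrow> (U 1 ^^ (2^j)) x = U (2^j) x"
proof (induct j arbitrary: x)
  case 0 then show ?case by simp
next
  case (Suc j)
  have e: "(2::nat)^Suc j = 2^j + 2^j" by simp
  have "(U 1 ^^ (2^Suc j)) x = (U 1 ^^ (2^j)) ((U 1 ^^ (2^j)) x)"
    unfolding e by (simp only: funpow_add comp_apply)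
  also have "\<dots> = U (2^j) (U (2^j) x)"
    using Suc(1)[OF U_bin[OF Suc(2)]] Suc(1)[OF Suc(2)] by simp
  also have "\<dots> = U (2^Suc j) x" using UU[OF Suc(2)] by simp
  finally show ?case .
qed

lemma U_N: "x \<in> binvecs N \<Longrightarrow> U N x = replicate N 0"
proof -
  assume x: "x \<in> binvecs N"
  show ?thesis
  proof (rule nth_equalityI)
    show "length (U N x) = length (replicate N 0)" using U_bin[OF x, of N] by (auto dest!: binvecsD)
    fix i assume "i < length (U N x)"
    then have i: "i < N" using U_bin[OF x, of N] by (auto dest!: binvecsD)
    then show "U N x ! i = replicate N 0 ! i" using U_nth[OF x i] by simp
  qed
qed

lemma doubling:
  fixes f :: "'a \<Rightarrow> 'a \<Rightarrow> 'a"
  assumes fin: "finite V" and AB: "A \<subset> B" and BV: "B \<subseteq> V"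
    and comm: "\<And>x y. f x y = f y x"
    and canc: "\<And>x y. x\<in>V \<Longrightarrow> y\<in>V \<Longrightarrow> f (f x y) y = x"
    and fA: "\<And>x y. x\<in>A \<Longrightarrow> y\<in>A \<Longrightarrow> f x y \<in> A"
    and fB: "\<And>x y. x\<in>B \<Longrightarrow> y\<in>B \<Longrightarrow> f x y \<in> B"
  shows "2 * card A \<le> card B"
proof -
  obtain a where a: "a \<in> B" "a \<notin> A" using AB by auto
  have AV: "A \<subseteq> V" using AB BV by auto
  have finA: "finite A" using AV fin finite_subset by blast
  have fB': "finite B" using BV fin finite_subset by blast
  have sub: "A \<union> f a ` A \<subseteq> B" using AB a fB by auto
  have disj: "A \<inter> f a ` A = {}"
  proof (rule ccontr)
    assume "A \<inter> f a ` A \<noteq> {}"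
    then obtain s where s: "s \<in> A" "f a s \<in> A" by auto
    then have "f (f a s) s \<in> A" using fA by blast
    moreover have "f (f a s) s = a" using canc[of a s] a s AV BV by auto
    ultimately show False using a by simp
  qed
  have inj: "inj_on (f a) A"
  proof
    fix s s' assume s: "s \<in> A" "s' \<in> A" "f a s = f a s'"
    have sV: "s \<in> V" "s' \<in> V" "a \<in> V" using s a AV BV by auto
    have "s = f (f s a) a" using canc[OF sV(1) sV(3)] by simp
    also have "\<dots> = f (f a s') a" using s comm by metis
    also have "\<dots> = s'" using canc[OF sV(2) sV(3)] comm by simp
    finally show "s = s'" .
  qed
  have "card (A \<union> f a ` A) = card A + card (f a ` A)"
    using disj finA by (simp add: card_Un_disjoint)
  also have "\<dots> = 2 * card A" using card_image[OF inj] by simp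
  finally show ?thesis using card_mono[OF fB' sub] by simp
qed

lemma chain:
  fixes V M :: "'a set" and f :: "'a \<Rightarrow> 'a \<Rightarrow> 'a" and T :: "'a \<Rightarrow> 'a"
  assumes fin: "finite V" and MV: "M \<subseteq> V"
   and fV: "\<And>x y. x\<in>V \<Longrightarrow> y\<in>V \<Longrightarrow> f x y \<in> V"
   and comm: "\<And>x y. f x y = f y x"
   and canc: "\<And>x y. x\<in>V \<Longrightarrow> y\<in>V \<Longrightarrow> f (f x y) y = x"
   and fM: "\<And>x y. x\<in>M \<Longrightarrow> y\<in>M \<Longrightarrow> f x y \<in> M"
   and TV: "\<And>x. x\<in>V \<Longrightarrow> T x \<in> V"
   and Tadd: "\<And>x y. x\<in>V \<Longrightarrow> y\<in>V \<Longrightarrow> T (f x y) = f (T x) (T y)"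
   and TM: "\<And>x. x\<in>M \<Longrightarrow> T x \<in> M"
   and nil: "\<And>x. x\<in>V \<Longrightarrow> (T^^K) x \<in> M"
  shows "{x\<in>V. (T^^k) x \<in> M} = V \<or> 2^k * card M \<le> card {x\<in>V. (T^^k) x \<in> M}"
proof -
  define S where "S k = {x\<in>V. (T^^k) x \<in> M}" for k
  have TkV: "\<And>k x. x \<in> V \<Longrightarrow> (T^^k) x \<in> V"
  proof -
    fix k x assume "x \<in> V" then show "(T^^k) x \<in> V" by (induct k) (auto intro: TV)
  qed
  have Tkadd: "\<And>k x y. x \<in> V \<Longrightarrow> y \<in> V \<Longrightarrow> (T^^k) (f x y) = f ((T^^k) x) ((T^^k) y)"
  proof -
    fix k x y assume "x \<in> V" "y \<in> V" then show "(T^^k) (f x y) = f ((T^^k) x) ((T^^k) y)"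
      by (induct k) (auto simp: Tadd TkV)
  qed
  have TkM: "\<And>k x. x \<in> M \<Longrightarrow> (T^^k) x \<in> M"
  proof -
    fix k x assume "x \<in> M" then show "(T^^k) x \<in> M" by (induct k) (auto intro: TM)
  qed
  have SV: "\<And>k. S k \<subseteq> V" unfolding S_def by auto
  have Sf: "\<And>k x y. x \<in> S k \<Longrightarrow> y \<in> S k \<Longrightarrow> f x y \<in> S k"
    unfolding S_def using Tkadd fM fV by auto
  have mono: "\<And>k. S k \<subseteq> S (Suc k)"
    unfolding S_def using TM by auto
  have shift: "\<And>k x. x \<in> S (Suc k) \<longleftrightarrow> x \<in> V \<and> T x \<in> S k"
    unfolding S_def using TV by (auto simp: funpow_Suc_right simp del: funpow.simps)
  have full: "\<And>k. S (k + K) = V"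
  proof -
    fix k
    have "\<And>x. x \<in> V \<Longrightarrow> (T^^(k+K)) x \<in> M"
    proof -
      fix x assume x: "x \<in> V"
      have "(T^^(K+k)) x = (T^^K) ((T^^k) x)" by (simp add: funpow_add)
      then show "(T^^(k+K)) x \<in> M" using nil[OF TkV[OF x]] by (simp add: add.commute)
    qed
    then show "S (k + K) = V" unfolding S_def by auto
  qed
  have stab: "\<And>k j. S (Suc k) = S k \<Longrightarrow> S (k + j) = S k"
  proof -
    fix k j assume h: "S (Suc k) = S k"
    have step: "\<And>i. S (Suc (k + i)) = S (k + i)"
    proof -
      fix i show "S (Suc (k + i)) = S (k + i)"
      proof (induct i)
        case 0 then show ?case using h by simp
      next
        case (Suc i)
        have "S (Suc (Suc (k+i))) = {x\<in>V. T x \<in> S (Suc (k+i))}" using shift by blast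
        also have "\<dots> = {x\<in>V. T x \<in> S (k+i)}" using Suc by simp
        also have "\<dots> = S (Suc (k+i))" using shift by blast
        finally show ?case by simp
      qed
    qed
    show "S (k + j) = S k"
    proof (induct j)
      case 0 then show ?case by simp
    next
      case (Suc j) then show ?case using step[of j] by simp
    qed
  qed
  have "S k = V \<or> 2^k * card M \<le> card (S k)"
  proof (induct k)
    case 0
    have "S 0 = M" unfolding S_def using MV by auto
    then show ?case by simp
  next
    case (Suc k)
    show ?case
    proof (cases "S (Suc k) = V")
      case True then show ?thesis by simp
    next
      case False
      then have nk: "S k \<noteq> V" using mono[of k] SV[of "Suc k"] by auto
      then have ck: "2^k * card M \<le> card (S k)" using Suc by simp
      have "S (Suc k) \<noteq> S k"
      proof
        assume "S (Suc k) = S k"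
        then have "S (k + K) = S k" by (rule stab)
        then show False using full[of k] nk by simp
      qed
      then have "S k \<subset> S (Suc k)" using mono[of k] by auto
      then have "2 * card (S k) \<le> card (S (Suc k))"
        by (rule doubling[OF fin _ SV comm canc Sf Sf])
      then show ?thesis using ck by simp
    qed
  qed
  then show ?thesis unfolding S_def .
qed

lemma sum_zs[simp]: "sum_list (replicate n (0::nat)) = 0" by (induct n) auto

lemma lee0[simp]: "lee_wt 0 = 0" by (simp add: lee_wt_def)

lemma wt_zero[simp]: "z2z4_weight (z2z4_zero a b) = 0"
  unfolding z2z4_zero_def z2z4_weight_def by simp

lemma lee_neg: "(a::nat) < 4 \<Longrightarrow> lee_wt ((4-a) mod 4) = lee_wt a"
proof -
  assume "a < 4" then have "a = 0 \<or> a = 1 \<or> a = 2 \<or> a = 3" by auto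
  then show ?thesis by (elim disjE; simp add: lee_wt_def)
qed

lemma lee_dbl: "(a::nat) < 4 \<Longrightarrow> lee_wt a = 1 \<Longrightarrow> lee_wt ((a+a) mod 4) = 2"
proof -
  assume "a < 4" "lee_wt a = 1" then have "a = 1 \<or> a = 3" by (auto simp: lee_wt_def split: if_splits)
  then show ?thesis by (elim disjE; simp add: lee_wt_def)
qed

lemma lee_dbl_le: "(a::nat) < 4 \<Longrightarrow> lee_wt ((a+a) mod 4) \<le> 2 * lee_wt a"
proof -
  assume "a < 4" then have "a = 0 \<or> a = 1 \<or> a = 2 \<or> a = 3" by auto
  then show ?thesis by (elim disjE; simp add: lee_wt_def)
qed

lemma lee_pos: "(a::nat) \<noteq> 0 \<Longrightarrow> 1 \<le> lee_wt a" by (simp add: lee_wt_def)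

lemma sum_lee_neg: "\<forall>a\<in>set (w::nat list). a < 4 \<Longrightarrow> sum_list (map lee_wt (map (\<lambda>a. (4-a) mod 4) w)) = sum_list (map lee_wt w)"
  by (induct w) (auto simp: lee_neg)

lemma sum_lee_dbl_le: "\<forall>a\<in>set (w::nat list). a < 4 \<Longrightarrow> sum_list (map lee_wt (map (\<lambda>a. (a+a) mod 4) w)) \<le> 2 * sum_list (map lee_wt w)"
proof (induct w)
  case Nil then show ?case by simp
next
  case (Cons a w) then show ?case using lee_dbl_le[of a] by simp
qed

lemma rot_rep: "rotate n (replicate m a) = replicate m a"
proof -
  have r1: "rotate1 (replicate m a) = replicate m a" for m
    by (cases m) (simp_all add: replicate_append_same)
  show ?thesis by (induct n) (simp_all add: r1)
qed

lemma sq_mod: "(N::nat) \<ge> 2 \<Longrightarrow> ((N-1)*(N-1)) mod N = 1"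
proof -
  assume "N \<ge> 2"
  then obtain m where m: "N = m + 2" by (metis add.commute le_Suc_ex)
  have e: "(N-1)*(N-1) = 1 + m * N" using m by (simp add: algebra_simps)
  have "(1 + m * N) mod N = 1 mod N" by (rule mod_mult_self1)
  then have "(1 + m * N) mod N = 1" using \<open>N \<ge> 2\<close> by simp
  then show ?thesis unfolding e .
qed

locale ext = perf +
  fixes p :: nat
  assumes p_le: "p \<le> a" and cyc: "z2z4_cyclic (parity_extend p ` C)"
begin

abbreviation "DD \<equiv> parity_extend p ` C"

lemma DD_add: "v \<in> DD \<Longrightarrow> w \<in> DD \<Longrightarrow> z2z4_add v w \<in> DD"
proof -
  assume "v \<in> DD" "w \<in> DD"
  then obtain c d where c: "c \<in> C" "v = parity_extend p c" and d: "d \<in> C" "w = parity_extend p d" by auto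
  have "z2z4_add v w = parity_extend p (z2z4_add c d)"
    using pe_add[OF C_space[OF c(1)] C_space[OF d(1)] p_le] c d by simp
  then show ?thesis using addC[OF c(1) d(1)] by simp
qed

lemma DD_neg: "v \<in> DD \<Longrightarrow> z2z4_neg v \<in> DD"
proof -
  assume "v \<in> DD"
  then obtain c where c: "c \<in> C" "v = parity_extend p c" by auto
  have "z2z4_neg v = parity_extend p (z2z4_neg c)" using pe_neg[OF C_space[OF c(1)]] c by simp
  then show ?thesis using negC[OF c(1)] by simp
qed

lemma DD_space: "v \<in> DD \<Longrightarrow> v \<in> z2z4_space (Suc a) b"
  using pe_space[OF C_space p_le] by auto

lemma DD_sig: "v \<in> DD \<Longrightarrow> (z2z4_sigma ^^ k) v \<in> DD"
  using cyc_pow[OF cyc] by simp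

lemma contra:
  assumes y: "(y, zs b) \<in> DD" and s: "sum_list y = 2"
  shows False
proof -
  obtain c where c: "c \<in> C" "parity_extend p c = (y, zs b)" using y by auto
  obtain u w where uw: "c = (u, w)" by (cases c)
  have cs: "c \<in> z2z4_space a b" using C_space[OF c(1)] .
  have w: "w = zs b" using c uw unfolding parity_extend_def by simp
  have u2: "\<forall>x\<in>set u. x < 2" and lu: "length u = a" using cs uw unfolding z2z4_space_def by auto
  have wt: "z2z4_weight c = sum_list u" using uw w cnt01[OF u2] unfolding z2z4_weight_def by (simp add: lee_wt_def)
  have "y = take p u @ [z2z4_weight c mod 2] @ drop p u" using c uw w unfolding parity_extend_def by simp
  then have yeq: "y = take p u @ [sum_list u mod 2] @ drop p u" using wt by simp
  have "sum_list y = sum_list u + sum_list u mod 2"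
  proof -
    have "sum_list y = sum_list (take p u) + sum_list u mod 2 + sum_list (drop p u)" using yeq by simp
    also have "\<dots> = sum_list (take p u @ drop p u) + sum_list u mod 2" by (simp only: sum_list_append)
    finally show ?thesis by simp
  qed
  then have k: "sum_list u + sum_list u mod 2 = 2" using s by simp
  have "\<And>k::nat. k + k mod 2 = 2 \<Longrightarrow> k = 1 \<or> k = 2"
  proof -
    fix k :: nat assume h: "k + k mod 2 = 2"
    then have "k \<le> 2" by linarith
    then have "k = 0 \<or> k = 1 \<or> k = 2" by arith
    then show "k = 1 \<or> k = 2" using h by (elim disjE; simp)
  qed
  then have "sum_list u = 1 \<or> sum_list u = 2" using k by blast
  then have w12: "1 \<le> z2z4_weight c" "z2z4_weight c \<le> 2" using wt by auto
  have "c \<noteq> z2z4_zero a b"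
  proof
    assume "c = z2z4_zero a b"
    then have "z2z4_weight c = 0" unfolding z2z4_zero_def z2z4_weight_def by simp
    then show False using w12 by simp
  qed
  then show False using MIN[OF c(1)] w12 by simp
qed

definition D0 :: "nat list set" where "D0 = {y. (y, zs b) \<in> DD}"

lemma D0_bin: "D0 \<subseteq> binvecs (Suc a)"
  unfolding D0_def binvecs_def using DD_space unfolding z2z4_space_def by auto

lemma D0_zero: "replicate (Suc a) 0 \<in> D0"
proof -
  let ?l = "take p (zs a) @ [0] @ drop p (zs a)"
  have L: "length ?l = Suc a" using p_le by simp
  have A: "\<forall>c\<in>set ?l. c = 0" by (auto dest: in_set_takeD in_set_dropD)
  have l0: "?l = replicate (Suc a) 0" using replicate_length_same[OF A] L by simp
  have "parity_extend p (z2z4_zero a b) = (replicate (Suc a) 0, zs b)"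
    using l0 wt_zero[of a b] unfolding parity_extend_def z2z4_zero_def by simp
  then show ?thesis unfolding D0_def using zero_C by force
qed

lemma D0_bx: "x \<in> D0 \<Longrightarrow> y \<in> D0 \<Longrightarrow> bx x y \<in> D0"
proof -
  assume x: "x \<in> D0" and y: "y \<in> D0"
  have "z2z4_add (x, zs b) (y, zs b) \<in> DD" using DD_add x y unfolding D0_def by auto
  moreover have "z2z4_add (x, zs b) (y, zs b) = (bx x y, zs b)"
    unfolding z2z4_add_def bx_def by (simp add: zip_same_conv_map)
  ultimately show ?thesis unfolding D0_def by simp
qed

lemma D0_rot: assumes x: "x \<in> D0" shows "rotate 1 x \<in> D0"
proof -
  have xs: "(x, zs b) \<in> DD" using x unfolding D0_def by simp
  have lx: "length x = Suc a" using x D0_bin unfolding binvecs_def by auto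
  have "(z2z4_sigma ^^ a) (x, zs b) \<in> DD" using DD_sig[OF xs] .
  moreover have "(z2z4_sigma ^^ a) (x, zs b) = (rotate (a * a) x, zs b)"
    using lx by (simp add: sigma_pow rot_rep)
  ultimately have "(rotate (a*a) x, zs b) \<in> DD" by simp
  moreover have "rotate (a*a) x = rotate 1 x"
  proof (cases "a = 0")
    case True
    then have "length x = 1" using lx by simp
    then show ?thesis by simp
  next
    case False
    then have "(a*a) mod Suc a = 1" using sq_mod[of "Suc a"] by simp
    then show ?thesis using lx by (metis rotate_conv_mod)
  qed
  ultimately show ?thesis unfolding D0_def by simp
qed

lemma D0_U: "x \<in> D0 \<Longrightarrow> U 1 x \<in> D0"
  unfolding U_def by (intro D0_bx D0_rot)

definition B0 :: "nat list set" where "B0 = {u. (u, zs b) \<in> C}"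

lemma B0_bin: "B0 \<subseteq> binvecs a"
  unfolding B0_def binvecs_def using C_space unfolding z2z4_space_def by auto

lemma B0_cover: assumes x: "x \<in> binvecs a" shows "\<exists>u\<in>B0. hamming_dist x u \<le> 1"
proof -
  have vs: "(x, zs b) \<in> z2z4_space a b" using x unfolding binvecs_def z2z4_space_def by auto
  obtain c where c: "c \<in> C" "z2z4_weight (z2z4_add (x, zs b) (z2z4_neg c)) \<le> 1" using COVER[OF vs] by auto
  obtain u w where uw: "c = (u, w)" by (cases c)
  have cs: "c \<in> z2z4_space a b" using C_space[OF c(1)] .
  have lu: "length u = a" and lw: "length w = b" and u2: "\<forall>x\<in>set u. x < 2" and w4: "\<forall>x\<in>set w. x < 4"
    using cs uw unfolding z2z4_space_def by auto
  have x2: "\<forall>c\<in>set x. c < 2" "length x = a" using x unfolding binvecs_def by auto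
  have e1: "map2 (\<lambda>a b. (a + b) mod 4) (zs b) (map (\<lambda>a. (4 - a) mod 4) w) = map (\<lambda>a. (4 - a) mod 4) w"
    using lw by (intro nth_equalityI) auto
  have wsplit: "z2z4_weight (z2z4_add (x, zs b) (z2z4_neg c)) = hamming_dist x u + sum_list (map lee_wt w)"
    unfolding z2z4_add_def z2z4_neg_def z2z4_weight_def uw
    using e1 hd_bin[of x u] x2 lu u2 sum_lee_neg[OF w4] by simp
  have sw: "sum_list (map lee_wt w) \<le> 1" "hamming_dist x u + sum_list (map lee_wt w) \<le> 1" using c(2) wsplit by auto
  have w0: "w = zs b"
  proof (rule ccontr)
    assume "w \<noteq> zs b"
    then obtain j where j: "j < b" "w ! j \<noteq> 0" using lw by (metis nth_equalityI length_replicate nth_replicate)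
    have "1 \<le> lee_wt (w!j)" using lee_pos[OF j(2)] .
    moreover have "lee_wt (w!j) \<le> sum_list (map lee_wt w)" using elem_le_sum_list[of j "map lee_wt w"] j lw by simp
    ultimately have lj: "lee_wt (w!j) = 1" "sum_list (map lee_wt w) = 1" using sw by auto
    define cc where "cc = z2z4_add c c"
    have ccC: "cc \<in> C" unfolding cc_def using addC[OF c(1) c(1)] .
    have cc_eq: "cc = (map2 (\<lambda>a b. (a + b) mod 2) u u, map (\<lambda>a. (a+a) mod 4) w)"
      unfolding cc_def z2z4_add_def uw by (simp add: zip_same_conv_map)
    have f0: "filter (\<lambda>a. a \<noteq> 0) (map2 (\<lambda>a b. (a + b) mod 2) u u) = []"
      by (simp add: zip_same_conv_map filter_empty_conv)
    have wcc: "z2z4_weight cc = sum_list (map lee_wt (map (\<lambda>a. (a+a) mod 4) w))"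
      unfolding cc_eq z2z4_weight_def using f0 by simp
    have le2: "z2z4_weight cc \<le> 2" using wcc sum_lee_dbl_le[OF w4] lj by simp
    have wj4: "w!j < 4" using w4 j lw by (simp add: nth_mem)
    have "lee_wt ((w!j + w!j) mod 4) \<le> z2z4_weight cc"
      unfolding wcc using elem_le_sum_list[of j "map lee_wt (map (\<lambda>a. (a+a) mod 4) w)"] j lw by simp
    then have ge2: "2 \<le> z2z4_weight cc" using lee_dbl[OF wj4 lj(1)] by simp
    have "cc \<noteq> z2z4_zero a b"
    proof
      assume "cc = z2z4_zero a b"
      then have "z2z4_weight cc = 0" unfolding z2z4_zero_def z2z4_weight_def by simp
      then show False using ge2 by simp
    qed
    then show False using MIN[OF ccC] le2 by simp
  qed
  have "u \<in> B0" using c(1) uw w0 unfolding B0_def by simp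
  moreover have "hamming_dist x u \<le> 1" using sw by simp
  ultimately show ?thesis by blast
qed

lemma B0_card: "2^a \<le> card B0 * (a+1)"
  using BC[OF B0_bin] B0_cover by blast

lemma D0_card: "card B0 \<le> card D0"
proof -
  let ?g = "\<lambda>u. take p u @ [sum_list u mod 2] @ drop p u"
  have img: "?g ` B0 \<subseteq> D0"
  proof
    fix y assume "y \<in> ?g ` B0"
    then obtain u where u: "u \<in> B0" "y = ?g u" by auto
    have uC: "(u, zs b) \<in> C" using u unfolding B0_def by simp
    have u2: "\<forall>x\<in>set u. x < 2" using C_space[OF uC] unfolding z2z4_space_def by auto
    have "parity_extend p (u, zs b) = (y, zs b)"
      unfolding parity_extend_def z2z4_weight_def using u cnt01[OF u2] by (simp add: lee_wt_def)
    then show "y \<in> D0" unfolding D0_def using uC by force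
  qed
  have inj: "inj_on ?g B0"
  proof
    fix u v assume uv: "u \<in> B0" "v \<in> B0" "?g u = ?g v"
    have lu: "length u = a" "length v = a" using uv B0_bin unfolding binvecs_def by auto
    have "take p (?g u) @ drop (Suc p) (?g u) = u" using lu p_le by simp
    moreover have "take p (?g v) @ drop (Suc p) (?g v) = v" using lu p_le by simp
    ultimately show "u = v" using uv by metis
  qed
  have "finite D0" using D0_bin finite_binvecs finite_subset by blast
  then show ?thesis using card_image[OF inj] card_mono[OF _ img] by simp
qed

end

lemma pow_ge: "3 \<le> r \<Longrightarrow> r + 1 \<le> (2::nat)^(r-1)"
proof (induct r rule: dec_induct)
  case base then show ?case by simp
next
  case (step n)
  then have "(2::nat)^(Suc n - 1) = 2 * 2^(n-1)" by (cases n) auto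
  then show ?case using step by simp
qed

lemma e0_U:
  assumes A: "0 < A" "A < N" "N = 2 * A"
  shows "sum_list (U A (1 # replicate (N-1) 0)) = 2" and "1 # replicate (N-1) 0 \<in> binvecs N"
proof -
  let ?e = "1 # replicate (N-1) (0::nat)"
  show eb: "?e \<in> binvecs N" using A unfolding binvecs_def by auto
  have en: "\<And>j. j < N \<Longrightarrow> ?e ! j = (if j = 0 then 1 else 0)" by (simp add: nth_Cons')
  have ub: "U A ?e \<in> binvecs N" by (rule U_bin[OF eb])
  have lu: "length (U A ?e) = N" using ub unfolding binvecs_def by simp
  have key: "\<And>i. i < N \<Longrightarrow> (U A ?e ! i \<noteq> 0) = (i = 0 \<or> i = A)"
  proof -
    fix i assume i: "i < N"
    have m: "(A + i) mod N < N" using i by simp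
    have iff: "((A + i) mod N = 0) = (i = A)"
    proof
      assume h: "(A + i) mod N = 0"
      show "i = A"
      proof (cases "A + i < N")
        case True
        then have "(A + i) mod N = A + i" by simp
        then show ?thesis using h A by simp
      next
        case False
        then have "(A + i) mod N = (A + i - N) mod N" by (simp add: le_mod_geq)
        also have "\<dots> = A + i - N" using A i by simp
        finally show ?thesis using h A False by simp
      qed
    next
      assume "i = A" then show "(A + i) mod N = 0" using A by (simp add: mult_2)
    qed
    show "(U A ?e ! i \<noteq> 0) = (i = 0 \<or> i = A)"
      using U_nth[OF eb i, of A] en[OF i] en[OF m] iff A by auto
  qed
  have u2: "\<forall>x\<in>set (U A ?e). x < 2" using ub unfolding binvecs_def by auto
  have "sum_list (U A ?e) = card {i. i < N \<and> U A ?e ! i \<noteq> 0}"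
    using cnt01[OF u2] lu by (simp add: length_filter_conv_card)
  also have "{i. i < N \<and> U A ?e ! i \<noteq> 0} = {0, A}" using key A by auto
  also have "card {0, A} = 2" using A by simp
  finally show "sum_list (U A ?e) = 2" .
qed

context ext
begin

lemma big_r:
  assumes r3: "3 \<le> r" and ar: "a = 2^r - 1"
  shows False
proof -
  define N where "N = Suc a"
  define A where "A = (2::nat)^(r-1)"
  have Nr: "N = 2^r" unfolding N_def using ar by simp
  have "(2::nat)^r = 2^(Suc (r-1))" using r3 by simp
  also have "\<dots> = 2 * 2^(r-1)" by simp
  finally have NA: "N = 2 * A" unfolding Nr A_def .
  have Ar: "r + 1 \<le> A" unfolding A_def using pow_ge[OF r3] .
  have A0: "0 < A" "A < N" using Ar NA by auto
  have cB: "2^a \<le> card B0 * 2^r" using B0_card ar by simp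
  have cD: "2^a \<le> card D0 * 2^r" using cB D0_card by (meson le_trans mult_le_mono1)
  let ?V = "binvecs N"
  have ch: "{x\<in>?V. (U 1 ^^ A) x \<in> D0} = ?V \<or> 2^A * card D0 \<le> card {x\<in>?V. (U 1 ^^ A) x \<in> D0}"
  proof (rule chain[where K=N and f=bx])
    show "finite ?V" by (rule finite_binvecs)
    show "D0 \<subseteq> ?V" using D0_bin unfolding N_def .
    show "\<And>x y. x \<in> ?V \<Longrightarrow> y \<in> ?V \<Longrightarrow> bx x y \<in> ?V" by (rule bx_bin)
    show "\<And>x y. bx x y = bx y x" by (rule bx_comm)
    show "\<And>x y. x \<in> ?V \<Longrightarrow> y \<in> ?V \<Longrightarrow> bx (bx x y) y = x" by (rule bx_cancel)
    show "\<And>x y. x \<in> D0 \<Longrightarrow> y \<in> D0 \<Longrightarrow> bx x y \<in> D0" by (rule D0_bx)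
    show "\<And>x. x \<in> ?V \<Longrightarrow> U 1 x \<in> ?V" by (rule U_bin)
    show "\<And>x y. x \<in> ?V \<Longrightarrow> y \<in> ?V \<Longrightarrow> U 1 (bx x y) = bx (U 1 x) (U 1 y)" by (rule U_add)
    show "\<And>x. x \<in> D0 \<Longrightarrow> U 1 x \<in> D0" by (rule D0_U)
    show "\<And>x. x \<in> ?V \<Longrightarrow> (U 1 ^^ N) x \<in> D0"
    proof -
      fix x assume x: "x \<in> ?V"
      have "(U 1 ^^ N) x = U N x" using T_pow2[OF x, of r] Nr by simp
      also have "\<dots> = replicate N 0" by (rule U_N[OF x])
      finally show "(U 1 ^^ N) x \<in> D0" using D0_zero unfolding N_def by simp
    qed
  qed
  have big: "2^N \<le> 2^A * card D0"
  proof -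
    have "(2::nat)^(3*A - 1) = 2^A * 2^a" using NA N_def A0 by (simp add: power_add[symmetric])
    also have "\<dots> \<le> 2^A * (card D0 * 2^r)" using cD by simp
    finally have h1: "(2::nat)^(3*A - 1) \<le> (2^A * card D0) * 2^r" by (simp add: algebra_simps)
    have "(2::nat)^N * 2^r = 2^(N + r)" by (simp add: power_add)
    also have "\<dots> \<le> 2^(3*A - 1)" using NA Ar by (intro power_increasing) auto
    finally have h2: "(2::nat)^N * 2^r \<le> 2^(3*A - 1)" .
    have "(2::nat)^N * 2^r \<le> (2^A * card D0) * 2^r" using le_trans[OF h2 h1] .
    then show ?thesis by (simp only: mult_le_cancel2) simp
  qed
  have allV: "{x\<in>?V. (U 1 ^^ A) x \<in> D0} = ?V"
  proof (rule ccontr)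
    assume ne: "{x\<in>?V. (U 1 ^^ A) x \<in> D0} \<noteq> ?V"
    then have "{x\<in>?V. (U 1 ^^ A) x \<in> D0} \<subset> ?V" by auto
    then have "card {x\<in>?V. (U 1 ^^ A) x \<in> D0} < card ?V" by (rule psubset_card_mono[OF finite_binvecs])
    then have "card {x\<in>?V. (U 1 ^^ A) x \<in> D0} < 2^N" by (simp add: card_binvecs)
    then show False using ch ne big by simp
  qed
  let ?e = "1 # replicate (N-1) (0::nat)"
  have eV: "?e \<in> ?V" using e0_U(2)[OF A0 NA] .
  then have "(U 1 ^^ A) ?e \<in> D0" using allV by blast
  moreover have "(U 1 ^^ A) ?e = U A ?e" using T_pow2[OF eV, of "r-1"] unfolding A_def .
  ultimately have "(U A ?e, zs b) \<in> DD" unfolding D0_def by simp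
  then show False using contra e0_U(1)[OF A0 NA] by blast
qed

end

lemma len4: "length x = 4 \<Longrightarrow> \<exists>x0 x1 x2 x3. x = [x0,x1,x2,x3]"
  by (auto simp: numeral_eq_Suc length_Suc_conv)

lemma rots: "rotate 1 [a,b,c,d] = [b,c,d,a]" "rotate 2 [a,b,c,d] = [c,d,a,b]" "rotate 3 [a,b,c,d] = [d,a,b,c]"
  by (simp_all add: rotate_def numeral_eq_Suc)

lemma bin4: "x \<in> binvecs 4 \<Longrightarrow> \<exists>x0 x1 x2 x3. x = [x0,x1,x2,x3] \<and> (x0 = 0 \<or> x0 = 1) \<and> (x1 = 0 \<or> x1 = 1) \<and> (x2 = 0 \<or> x2 = 1) \<and> (x3 = 0 \<or> x3 = 1)"
proof -
  assume x: "x \<in> binvecs 4"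
  then have l: "length x = 4" and e: "\<forall>a\<in>set x. a < 2" unfolding binvecs_def by auto
  obtain x0 x1 x2 x3 where "x = [x0,x1,x2,x3]" using len4[OF l] by blast
  moreover then have "x0 < 2" "x1 < 2" "x2 < 2" "x3 < 2" using e by auto
  ultimately show ?thesis by auto
qed

lemma odd_lem: "x \<in> binvecs 4 \<Longrightarrow> odd (sum_list x) \<Longrightarrow> sum_list (bx x (rotate 2 x)) = 2"
  apply (drule bin4)
  apply (elim exE conjE)
  apply (elim disjE)
  by (simp_all add: bx_def rots)

lemma anti_lem: "x \<in> binvecs 4 \<Longrightarrow> sum_list x = 2 \<Longrightarrow> k = 1 \<or> k = 3 \<Longrightarrow> sum_list (bx x (rotate k x)) \<noteq> 2 \<Longrightarrow>
   x = [1,0,1,0] \<or> x = [0,1,0,1]"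
  apply (drule bin4)
  apply (elim exE conjE)
  apply (elim disjE)
  by (simp_all add: bx_def rots)

lemma anti_eq: "x = [1,0,1,0] \<or> x = [0,1,0,1] \<Longrightarrow> y = [1,0,1,0] \<or> y = [0,1,0,1] \<Longrightarrow>
   (p::nat) < 4 \<Longrightarrow> x!p = 1 \<Longrightarrow> y!p = 1 \<Longrightarrow> x = y"
proof -
  assume h: "x = [1,0,1,0] \<or> x = [0,1,0,1]" "y = [1,0,1,0] \<or> y = [0,1,0,1]" "p < 4" "x!p = 1" "y!p = 1"
  then have "p = 0 \<or> p = 1 \<or> p = 2 \<or> p = 3" by auto
  then show "x = y" using h by (elim disjE; auto)
qed

lemma z4inv: "(a::nat) < 4 \<Longrightarrow> (a + (4-a) mod 4) mod 4 = 0"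
proof -
  assume "a < 4" then have "a = 0 \<or> a = 1 \<or> a = 2 \<or> a = 3" by auto
  then show ?thesis by (elim disjE; simp)
qed

lemma z4inv_list: "\<forall>a\<in>set (w::nat list). a < 4 \<Longrightarrow> map2 (\<lambda>a b. (a+b) mod 4) w (map (\<lambda>a. (4-a) mod 4) w) = replicate (length w) 0"
  by (intro nth_equalityI) (auto simp: z4inv nth_mem)

lemma z4inv_list2: "\<forall>a\<in>set (w::nat list). a < 4 \<Longrightarrow> map2 (\<lambda>a b. (a+b) mod 4) (map (\<lambda>a. (4-a) mod 4) w) w = replicate (length w) 0"
  by (intro nth_equalityI) (auto simp: z4inv nth_mem add.commute)

lemma par_aux: "odd (W::nat) \<Longrightarrow> odd (V + (V + W) mod 2)"
  by (cases "even V") (auto simp: odd_iff_mod_2_eq_one mod_add_eq[symmetric])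

context ext
begin

lemma pe_fst: "c \<in> C \<Longrightarrow> c = (u, w) \<Longrightarrow> parity_extend p c = (take p u @ [z2z4_weight c mod 2] @ drop p u, w)"
  unfolding parity_extend_def by simp

lemma pe_fst_bin: "c \<in> C \<Longrightarrow> fst (parity_extend p c) \<in> binvecs (Suc a)"
  using DD_space[of "parity_extend p c"] unfolding z2z4_space_def binvecs_def by auto

lemma oddbad:
  assumes a3: "a = 3" and rb: "(b*3) mod 4 = 2" and b0: "0 < b" and c: "c \<in> C" and od: "odd (sum_list (snd c))"
  shows False
proof -
  obtain u w where uw: "c = (u, w)" by (cases c)
  have cs: "c \<in> z2z4_space a b" using C_space[OF c] .
  have lu: "length u = 3" and lw: "length w = b" and u2: "\<forall>x\<in>set u. x < 2" and w4: "\<forall>x\<in>set w. x < 4"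
    using cs uw a3 unfolding z2z4_space_def by auto
  define x where "x = take p u @ [z2z4_weight c mod 2] @ drop p u"
  have pe: "parity_extend p c = (x, w)" using pe_fst[OF c uw] x_def by simp
  have xb: "x \<in> binvecs 4" using pe_fst_bin[OF c] pe a3 by simp
  have lx: "length x = 4" using xb unfolding binvecs_def by simp
  have sx: "sum_list x = sum_list u + z2z4_weight c mod 2"
  proof -
    have "sum_list x = sum_list (take p u) + z2z4_weight c mod 2 + sum_list (drop p u)" unfolding x_def by simp
    also have "\<dots> = sum_list (take p u @ drop p u) + z2z4_weight c mod 2" by (simp only: sum_list_append)
    finally show ?thesis by simp
  qed
  have "z2z4_weight c mod 2 = (sum_list u + sum_list w) mod 2" using wt_par[OF cs] uw by simp
  then have oddx: "odd (sum_list x)" using sx par_aux[of "sum_list w" "sum_list u"] od uw by simp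
  have d1: "(x, w) \<in> DD" using c pe by force
  have "(z2z4_sigma ^^ b) (x, w) = (rotate (b * 3) x, rotate (b * (b - 1)) w)"
    using lx lw by (simp add: sigma_pow)
  also have "rotate (b * 3) x = rotate 2 x" using lx rb by (metis rotate_conv_mod)
  also have "rotate (b * (b - 1)) w = w" using lw b0 by simp
  finally have d2: "(rotate 2 x, w) \<in> DD" using DD_sig[OF d1, of b] by simp
  have "z2z4_add (x, w) (z2z4_neg (rotate 2 x, w)) \<in> DD" using DD_add[OF d1 DD_neg[OF d2]] .
  moreover have "z2z4_add (x, w) (z2z4_neg (rotate 2 x, w)) = (bx x (rotate 2 x), zs b)"
    unfolding z2z4_add_def z2z4_neg_def bx_def using z4inv_list[OF w4] lw by simp
  ultimately have "(bx x (rotate 2 x), zs b) \<in> DD" by simp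
  then show False using contra odd_lem[OF xb oddx] by blast
qed


lemma getu:
  assumes a3: "a = 3" and rb: "(b*3) mod 4 = 2" and b0: "0 < b"
    and lz: "length z = b" and z4: "\<forall>x\<in>set z. x < 4" and ez: "even (sum_list z)"
    and lz2: "sum_list (map lee_wt z) = 2"
  shows "\<exists>u. (u, z) \<in> C \<and> length u = 3 \<and> (\<forall>x\<in>set u. x < 2) \<and> sum_list u = 1"
proof -
  define v0 where "v0 = (zs 3, z)"
  have v0s: "v0 \<in> z2z4_space a b" unfolding v0_def z2z4_space_def using a3 lz z4 by auto
  obtain c where c: "c \<in> C" "z2z4_weight (z2z4_add v0 (z2z4_neg c)) \<le> 1" using COVER[OF v0s] by auto
  obtain u w where uw: "c = (u, w)" by (cases c)
  have cs: "c \<in> z2z4_space a b" using C_space[OF c(1)] .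
  have lu: "length u = 3" and lw: "length w = b" and u2: "\<forall>x\<in>set u. x < 2" and w4: "\<forall>x\<in>set w. x < 4"
    using cs uw a3 unfolding z2z4_space_def by auto
  define d where "d = z2z4_add v0 (z2z4_neg c)"
  have ds: "d \<in> z2z4_space a b" unfolding d_def using add_space[OF v0s neg_space[OF cs]] .
  have fd: "fst d = u"
    unfolding d_def v0_def z2z4_add_def z2z4_neg_def uw using lu u2
    by (intro nth_equalityI) (auto simp: nth_mem)
  have sd: "snd d = map2 (\<lambda>a b. (a+b) mod 4) z (map (\<lambda>a. (4-a) mod 4) w)"
    unfolding d_def v0_def z2z4_add_def z2z4_neg_def uw by simp
  have wd: "z2z4_weight d = sum_list u + sum_list (map lee_wt (snd d))"
    unfolding z2z4_weight_def using fd cnt01[OF u2] by simp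
  have wd1: "z2z4_weight d \<le> 1" using c(2) d_def by simp
  show ?thesis
  proof (cases "z2z4_weight d = 0")
    case True
    then have "v0 = c" using eq_of_wt0[OF v0s cs] d_def by simp
    then have v0C: "v0 \<in> C" using c(1) by simp
    have wv0: "z2z4_weight v0 = 2" unfolding v0_def z2z4_weight_def using lz2 by simp
    have "v0 \<noteq> z2z4_zero a b"
    proof
      assume "v0 = z2z4_zero a b" then have "z2z4_weight v0 = 0" by simp
      then show False using wv0 by simp
    qed
    then show ?thesis using MIN[OF v0C] wv0 by simp
  next
    case False
    then have wd_1: "z2z4_weight d = 1" using wd1 by simp
    have p1: "z2z4_weight d mod 2 = (sum_list (fst d) + sum_list (snd d)) mod 2" using wt_par[OF ds] .
    have p2: "sum_list (snd d) mod 2 = (sum_list z + sum_list (map (\<lambda>a. (4-a) mod 4) w)) mod 2"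
      unfolding sd using sum_add4[of z "map (\<lambda>a. (4-a) mod 4) w"] lz lw by simp
    have p3: "sum_list (map (\<lambda>a. (4-a) mod 4) w) mod 2 = sum_list w mod 2" using sum_neg[OF w4] .
    have q1: "(sum_list u + sum_list (snd d)) mod 2 = 1" using p1 wd_1 fd by simp
    have zz: "sum_list z mod 2 = 0" using ez by simp
    have "sum_list (snd d) mod 2 = (sum_list z mod 2 + sum_list (map (\<lambda>a. (4-a) mod 4) w) mod 2) mod 2"
      using p2 by (simp add: mod_add_eq)
    also have "\<dots> = sum_list w mod 2" using zz p3 by simp
    finally have q2: "sum_list (snd d) mod 2 = sum_list w mod 2" .
    have "(sum_list u + sum_list (snd d)) mod 2 = (sum_list u + sum_list w) mod 2"
      using mod_add_cong[OF refl q2] .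
    then have "(sum_list u + sum_list w) mod 2 = 1" using q1 by simp
    then have o: "odd (sum_list u + sum_list w)" by (metis odd_iff_mod_2_eq_one)
    have ew: "even (sum_list w)"
    proof (rule ccontr)
      assume "\<not> even (sum_list w)"
      then show False using oddbad[OF a3 rb b0 c(1)] uw by simp
    qed
    then have "odd (sum_list u)" using o by simp
    then have "sum_list u \<noteq> 0" by (metis even_zero)
    moreover have "sum_list u + sum_list (map lee_wt (snd d)) = 1" using wd wd_1 by simp
    ultimately have su: "sum_list u = 1" and sl: "sum_list (map lee_wt (snd d)) = 0" by linarith+
    define v1 where "v1 = (u, z)"
    have v1s: "v1 \<in> z2z4_space a b" unfolding v1_def z2z4_space_def using lu u2 lz z4 a3 by auto
    have f1: "filter (\<lambda>a. a \<noteq> 0) (map2 (\<lambda>a b. (a + b) mod 2) u u) = []"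
      using u2 by (auto simp: zip_same_conv_map filter_empty_conv)
    have "z2z4_weight (z2z4_add v1 (z2z4_neg c)) = sum_list (map lee_wt (snd d))"
      unfolding z2z4_weight_def v1_def z2z4_add_def z2z4_neg_def uw sd using f1 by simp
    then have "v1 = c" using eq_of_wt0[OF v1s cs] sl by simp
    then have "(u, z) \<in> C" using c(1) v1_def by simp
    then show ?thesis using lu u2 su by blast
  qed
qed


lemma xstep:
  assumes a3: "a = 3" and uC: "(u, z) \<in> C" and lu: "length u = 3" and u2: "\<forall>x\<in>set u. x < 2"
    and su: "sum_list u = 1" and lz: "sum_list (map lee_wt z) = 2"
  shows "parity_extend p (u, z) = (take p u @ [1] @ drop p u, z)"
    and "take p u @ [1] @ drop p u \<in> binvecs 4"
    and "sum_list (take p u @ [1] @ drop p u) = 2"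
    and "(take p u @ [1] @ drop p u) ! p = 1"
    and "take p (take p u @ [1] @ drop p u) @ drop (Suc p) (take p u @ [1] @ drop p u) = u"
proof -
  have w3: "z2z4_weight (u, z) = 3" unfolding z2z4_weight_def using cnt01[OF u2] su lz by simp
  show pe: "parity_extend p (u, z) = (take p u @ [1] @ drop p u, z)"
    unfolding parity_extend_def using w3 by simp
  show "take p u @ [1] @ drop p u \<in> binvecs 4" using pe_fst_bin[OF uC] pe a3 by simp
  have "sum_list (take p u @ [1] @ drop p u) = sum_list (take p u) + 1 + sum_list (drop p u)" by simp
  also have "\<dots> = sum_list (take p u @ drop p u) + 1" by (simp only: sum_list_append)
  finally show "sum_list (take p u @ [1] @ drop p u) = 2" using su by simp
  show "(take p u @ [1] @ drop p u) ! p = 1" using lu p_le a3 by (simp add: nth_append)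
  show "take p (take p u @ [1] @ drop p u) @ drop (Suc p) (take p u @ [1] @ drop p u) = u"
    using lu p_le a3 by simp
qed

lemma r2gen:
  assumes a3: "a = 3" and rb: "(b*3) mod 4 = 2" and b0: "0 < b"
    and lz1: "length z1 = b" and z14: "\<forall>x\<in>set z1. x < 4" and ez1: "even (sum_list z1)" and lee1: "sum_list (map lee_wt z1) = 2"
    and lz2: "length z2 = b" and z24: "\<forall>x\<in>set z2. x < 4" and ez2: "even (sum_list z2)" and lee2: "sum_list (map lee_wt z2) = 2"
    and rz1: "rotate (h*(b-1)) z1 = z1" and rz2: "rotate (h*(b-1)) z2 = map (\<lambda>a. (4-a) mod 4) z2"
    and hk: "(h*3) mod 4 = 1 \<or> (h*3) mod 4 = 3"
    and q: "sum_list (map lee_wt (map2 (\<lambda>a b. (a+b) mod 4) z1 (map (\<lambda>a. (4-a) mod 4) z2))) = 2"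
  shows False
proof -
  obtain u1 where u1: "(u1, z1) \<in> C" "length u1 = 3" "\<forall>x\<in>set u1. x < 2" "sum_list u1 = 1"
    using getu[OF a3 rb b0 lz1 z14 ez1 lee1] by blast
  obtain u2 where u2: "(u2, z2) \<in> C" "length u2 = 3" "\<forall>x\<in>set u2. x < 2" "sum_list u2 = 1"
    using getu[OF a3 rb b0 lz2 z24 ez2 lee2] by blast
  define x1 where "x1 = take p u1 @ [1] @ drop p u1"
  define x2 where "x2 = take p u2 @ [1] @ drop p u2"
  note X1 = xstep[OF a3 u1 lee1, folded x1_def]
  note X2 = xstep[OF a3 u2 lee2, folded x2_def]
  have lx1: "length x1 = 4" using X1(2) unfolding binvecs_def by simp
  have lx2: "length x2 = 4" using X2(2) unfolding binvecs_def by simp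
  have d1: "(x1, z1) \<in> DD" using u1(1) X1(1) by force
  have d2: "(x2, z2) \<in> DD" using u2(1) X2(1) by force
  have rk1: "rotate (h*3) x1 = rotate ((h*3) mod 4) x1" using lx1 by (metis rotate_conv_mod)
  have rk2: "rotate (h*3) x2 = rotate ((h*3) mod 4) x2" using lx2 by (metis rotate_conv_mod)
  have s1: "(rotate (h*3) x1, z1) \<in> DD"
    using DD_sig[OF d1, of h] lx1 lz1 rz1 by (simp add: sigma_pow)
  have s2: "(rotate (h*3) x2, map (\<lambda>a. (4-a) mod 4) z2) \<in> DD"
    using DD_sig[OF d2, of h] lx2 lz2 rz2 by (simp add: sigma_pow)
  have "z2z4_add (x1, z1) (z2z4_neg (rotate (h*3) x1, z1)) \<in> DD" using DD_add[OF d1 DD_neg[OF s1]] .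
  moreover have "z2z4_add (x1, z1) (z2z4_neg (rotate (h*3) x1, z1)) = (bx x1 (rotate (h*3) x1), zs b)"
    unfolding z2z4_add_def z2z4_neg_def bx_def using z4inv_list[OF z14] lz1 by simp
  ultimately have "(bx x1 (rotate (h*3) x1), zs b) \<in> DD" by simp
  then have "sum_list (bx x1 (rotate ((h*3) mod 4) x1)) \<noteq> 2" using contra rk1 by metis
  then have x1a: "x1 = [1,0,1,0] \<or> x1 = [0,1,0,1]" using anti_lem[OF X1(2) X1(3) hk] by simp
  have "z2z4_add (rotate (h*3) x2, map (\<lambda>a. (4-a) mod 4) z2) (x2, z2) \<in> DD" using DD_add[OF s2 d2] .
  moreover have "z2z4_add (rotate (h*3) x2, map (\<lambda>a. (4-a) mod 4) z2) (x2, z2) = (bx x2 (rotate (h*3) x2), zs b)"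
    unfolding z2z4_add_def using z4inv_list2[OF z24] lz2 bx_comm[of x2] unfolding bx_def by simp
  ultimately have "(bx x2 (rotate (h*3) x2), zs b) \<in> DD" by simp
  then have "sum_list (bx x2 (rotate ((h*3) mod 4) x2)) \<noteq> 2" using contra rk2 by metis
  then have x2a: "x2 = [1,0,1,0] \<or> x2 = [0,1,0,1]" using anti_lem[OF X2(2) X2(3) hk] by simp
  have "p < 4" using p_le a3 by simp
  then have "x1 = x2" using anti_eq[OF x1a x2a _ X1(4) X2(4)] by simp
  then have uu: "u1 = u2" using X1(5) X2(5) by metis
  define q where "q = map2 (\<lambda>a b. (a+b) mod 4) z1 (map (\<lambda>a. (4-a) mod 4) z2)"
  have qC: "z2z4_add (u1, z1) (z2z4_neg (u1, z2)) \<in> C" using addC[OF u1(1) negC] u2(1) uu by simp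
  have f1: "filter (\<lambda>a. a \<noteq> 0) (map2 (\<lambda>a b. (a + b) mod 2) u1 u1) = []"
    by (auto simp: zip_same_conv_map filter_empty_conv)
  have wq: "z2z4_weight (z2z4_add (u1, z1) (z2z4_neg (u1, z2))) = 2"
    unfolding z2z4_weight_def z2z4_add_def z2z4_neg_def using f1 q by simp
  have "z2z4_add (u1, z1) (z2z4_neg (u1, z2)) \<noteq> z2z4_zero a b"
  proof
    assume "z2z4_add (u1, z1) (z2z4_neg (u1, z2)) = z2z4_zero a b"
    then have "z2z4_weight (z2z4_add (u1, z1) (z2z4_neg (u1, z2))) = 0" by simp
    then show False using wq by simp
  qed
  then show False using MIN[OF qC] wq by simp
qed

end

theorem theorem4p2:
  fixes r t p :: nat and C :: "z2z4vec set"
  assumes "2 \<le> r" "r \<le> t" "t \<le> 2 * r" "3 \<le> t"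
    and "z2z4_one_perfect (2 ^ r - 1) (2 ^ (t - 1) - 2 ^ (r - 1)) C"
    and "p \<le> 2 ^ r - 1"
  shows "\<not> z2z4_cyclic (parity_extend p ` C)"
proof
  assume cy: "z2z4_cyclic (parity_extend p ` C)"
  interpret ext "2 ^ r - 1" "2 ^ (t - 1) - 2 ^ (r - 1)" C p
    using assms(5,6) cy by unfold_locales auto
  show False
  proof (cases "3 \<le> r")
    case True
    then show False using big_r by blast
  next
    case False
    then have r2: "r = 2" using assms(1) by simp
    then have a3: "(2::nat) ^ r - 1 = 3" by simp
    have "t = 3 \<or> t = 4" using assms(2,3,4) r2 by auto
    then show False
    proof
      assume t3: "t = 3"
      have b: "(2::nat) ^ (t - 1) - 2 ^ (r - 1) = 2" using t3 r2 by simp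
      show False
        using r2gen[OF a3, of "[1,1]" "[1,3]" 1] unfolding b
        by (simp add: lee_wt_def)
    next
      assume t4: "t = 4"
      have b: "(2::nat) ^ (t - 1) - 2 ^ (r - 1) = 6" using t4 r2 by simp
      have r1: "rotate 15 [1,0,0,1,0,0::nat] = [1,0,0,1,0,0]" by (simp add: rotate_def numeral_eq_Suc)
      have r2': "rotate 15 [1,0,0,3,0,0::nat] = [3,0,0,1,0,0]" by (simp add: rotate_def numeral_eq_Suc)
      show False
        using r2gen[OF a3, of "[1,0,0,1,0,0]" "[1,0,0,3,0,0]" 3] r1 r2' unfolding b
        by (simp add: lee_wt_def)
    qed
  qed
qed

end
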